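(* Let $S$ be an affine semigroup and let $F$ be a face of $\mathrm{pos}(S)$ that is the intersection of $k$ facets $F_1=\mathrm{pos}(S)\cap H_1,\ldots,F_k=\mathrm{pos}(S)\cap H_k$, and let $\sigma_i$ be the primitive linear form associated with $H_i$ ($i=1,\ldots,k$). Suppose that (1) there exist $\gamma_1,\ldots,\gamma_k\in S$ such that $\sigma_i(\gamma_j)=\delta_{ij}$ for all $1\le i,j\le k$; and (2) $\mathrm{grp}(S\cap F)=\mathrm{grp}(S)\cap H_1\cap\cdots\cap H_k$. Then $S_F/U(S_F)$ is a free commutative monoid with basis the images of $\gamma_1,\ldots,\gamma_k$.
   Context: An affine semigroup is a finitely generated submonoid $S$ of $\mathbb{Z}^n$ (containing $0$) with $\mathrm{grp}(S)=\mathbb{Z}^n$. $\mathrm{pos}(S)$ is the set of nonnegative real linear combinations of elements of $S$; a face is its intersection with a supporting hyperplane, a facet is a face of codimension one. Each facet has the form $\mathrm{pos}(S)\cap H$ with $H=\{\sigma=0\}$, $\sigma$ a primitive linear form (relatively prime integer coefficients) with $\sigma\ge0$ on $\mathrm{pos}(S)$, the primitive linear form associated with $H$. $S_F=\{\alpha-\beta:\alpha\in S,\beta\in S\cap F\}$ and $U(S_F)=\mathrm{grp}(S\cap F)$ is its group of units. *)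

theory Defs
  imports "HOL-Analysis.Analysis"
begin

definition rvec :: "int ^ 'n \<Rightarrow> real ^ 'n" where
  "rvec a = (\<chi> j. real_of_int (a $ j))"

definition monoid_gen :: "(int ^ 'n) set \<Rightarrow> (int ^ 'n) set" where
  "monoid_gen G = {x. \<exists>A c. finite A \<and> A \<subseteq> G \<and> x = (\<Sum>g\<in>A. int (c g) *s g)}"

definition grp :: "(int ^ 'n) set \<Rightarrow> (int ^ 'n) set" where
  "grp A = \<Inter> {G. A \<subseteq> G \<and> 0 \<in> G \<and> (\<forall>x\<in>G. \<forall>y\<in>G. x - y \<in> G)}"

definition affine_semigroup :: "(int ^ 'n) set \<Rightarrow> bool" where
  "affine_semigroup S \<longleftrightarrow> (\<exists>G. finite G \<and> S = monoid_gen G) \<and> grp S = UNIV"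

definition pos :: "(int ^ 'n) set \<Rightarrow> (real ^ 'n) set" where
  "pos S = {y. \<exists>A c. finite A \<and> A \<subseteq> S \<and> (\<forall>a\<in>A. 0 \<le> c a) \<and>
                     y = (\<Sum>a\<in>A. c a *\<^sub>R rvec a)}"

text \<open>A linear form Z^n \<rightarrow> Z is given by its integer coefficient vector.\<close>
definition lf :: "int ^ 'n \<Rightarrow> int ^ 'n \<Rightarrow> int" where
  "lf c x = (\<Sum>j\<in>UNIV. c $ j * x $ j)"

definition rlf :: "int ^ 'n \<Rightarrow> real ^ 'n \<Rightarrow> real" where
  "rlf c y = (\<Sum>j\<in>UNIV. real_of_int (c $ j) * y $ j)"

definition hyp :: "int ^ 'n \<Rightarrow> (real ^ 'n) set" where
  "hyp c = {y. rlf c y = 0}"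

text \<open>Primitive: coefficients relatively prime (in particular not all zero).\<close>
definition primitive :: "int ^ 'n \<Rightarrow> bool" where
  "primitive c \<longleftrightarrow> Gcd (range (\<lambda>j. c $ j)) = 1"

definition pts_in :: "(int ^ 'n) set \<Rightarrow> (real ^ 'n) set \<Rightarrow> (int ^ 'n) set" where
  "pts_in S F = {a \<in> S. rvec a \<in> F}"

definition SF :: "(int ^ 'n) set \<Rightarrow> (real ^ 'n) set \<Rightarrow> (int ^ 'n) set" where
  "SF S F = {a - b | a b. a \<in> S \<and> b \<in> pts_in S F}"

definition qclass :: "int ^ 'n \<Rightarrow> (int ^ 'n) set \<Rightarrow> (int ^ 'n) set" where
  "qclass x U = (\<lambda>u. x + u) ` U"

text \<open>M/U is the free commutative monoid with basis the classes of b 0, ..., b (k-1):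
  the canonical monoid homomorphism N^k \<rightarrow> M/U, m \<mapsto> [sum m_i b_i], is a bijection
  onto the quotient M/U = {x + U | x in M}.\<close>
definition free_quotient_basis ::
  "(int ^ 'n) set \<Rightarrow> (int ^ 'n) set \<Rightarrow> (nat \<Rightarrow> int ^ 'n) \<Rightarrow> nat \<Rightarrow> bool" where
  "free_quotient_basis M U b k \<longleftrightarrow>
     bij_betw (\<lambda>m. qclass (\<Sum>i<k. int (m i) *s b i) U)
              {m :: nat \<Rightarrow> nat. \<forall>i\<ge>k. m i = 0}
              ((\<lambda>x. qclass x U) ` M)"

end

theory Submission
  imports Defs
begin

lemma lf_add: "lf c (x + y) = lf c x + lf c y"
  by (simp add: lf_def algebra_simps sum.distrib)

lemma lf_diff: "lf c (x - y) = lf c x - lf c y"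
  by (simp add: lf_def algebra_simps sum_subtractf)

lemma lf_smult: "lf c (a *s x) = a * lf c x"
  by (simp add: lf_def sum_distrib_left algebra_simps)

lemma lf_zero: "lf c 0 = 0"
  by (simp add: lf_def)

lemma lf_sum: "lf c (sum f A) = (\<Sum>x\<in>A. lf c (f x))"
proof (induction A rule: infinite_finite_induct)
  case (infinite A) then show ?case by (simp add: lf_zero)
next
  case empty then show ?case by (simp add: lf_zero)
next
  case (insert x F) then show ?case by (simp add: lf_add)
qed

lemma rlf_rvec: "rlf c (rvec a) = real_of_int (lf c a)"
  by (simp add: rlf_def lf_def rvec_def)

lemma rvec_zero: "rvec 0 = 0"
  by (simp add: rvec_def vec_eq_iff)

lemma zero_pos: "0 \<in> pos S"
  unfolding pos_def by (rule CollectI, rule exI[of _ "{}"], auto)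

lemma rvec_pos: "a \<in> S \<Longrightarrow> rvec a \<in> pos S"
  unfolding pos_def by (rule CollectI, rule exI[of _ "{a}"], rule exI[of _ "\<lambda>_. 1"], auto)

lemma monoid_gen_zero: "0 \<in> monoid_gen G"
  unfolding monoid_gen_def by (rule CollectI, rule exI[of _ "{}"], auto)

lemma smult_int_add: "int (a + b) *s (g::int^'n) = int a *s g + int b *s g"
  by (simp add: vec_eq_iff distrib_right)

lemma monoid_gen_add:
  assumes x: "x \<in> monoid_gen G" and y: "y \<in> monoid_gen G"
  shows "x + y \<in> monoid_gen G"
proof -
  obtain A c where A: "finite A" "A \<subseteq> G" "x = (\<Sum>g\<in>A. int (c g) *s g)"
    using x unfolding monoid_gen_def by blast
  obtain B d where B: "finite B" "B \<subseteq> G" "y = (\<Sum>g\<in>B. int (d g) *s g)"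
    using y unfolding monoid_gen_def by blast
  define e where "e g = (if g \<in> A then c g else 0) + (if g \<in> B then d g else 0)" for g
  have fin: "finite (A \<union> B)" using A B by simp
  have 1: "(\<Sum>g\<in>A \<union> B. (if g \<in> A then int (c g) *s g else 0)) = x"
    using sum.inter_restrict[OF fin, of "\<lambda>g. int (c g) *s g" A] A
    by (simp add: Int_absorb1)
  have 2: "(\<Sum>g\<in>A \<union> B. (if g \<in> B then int (d g) *s g else 0)) = y"
    using sum.inter_restrict[OF fin, of "\<lambda>g. int (d g) *s g" B] B
    by (simp add: Int_absorb1)
  have "(\<Sum>g\<in>A \<union> B. int (e g) *s g) = 
     (\<Sum>g\<in>A \<union> B. (if g \<in> A then int (c g) *s g else 0) + (if g \<in> B then int (d g) *s g else 0))"
    by (rule sum.cong, simp_all add: e_def smult_int_add)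
  also have "\<dots> = x + y" using 1 2 by (simp add: sum.distrib)
  finally have "x + y = (\<Sum>g\<in>A \<union> B. int (e g) *s g)" by simp
  moreover have "A \<union> B \<subseteq> G" using A B by simp
  ultimately show ?thesis unfolding monoid_gen_def using fin by (intro CollectI exI conjI)
qed

lemma monoid_gen_smult:
  fixes m :: nat
  assumes "x \<in> monoid_gen G" shows "int m *s x \<in> monoid_gen G"
proof (induction m)
  case 0 then show ?case by (simp add: monoid_gen_zero)
next
  case (Suc m)
  have "int (Suc m) *s x = int m *s x + x" by (simp add: vec_eq_iff distrib_right)
  then show ?case using monoid_gen_add[OF Suc assms] by (simp add: add.commute)
qed

lemma monoid_gen_sum:
  fixes k :: nat
  assumes "\<forall>j<k. g j \<in> monoid_gen G"
  shows "(\<Sum>i<k. int (m i) *s g i) \<in> monoid_gen G"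
  using assms
proof (induction k)
  case 0 then show ?case by (simp add: monoid_gen_zero)
next
  case (Suc k)
  then show ?case by (simp add: monoid_gen_add monoid_gen_smult)
qed

lemma qclass_eq:
  assumes K: "\<And>u v. u \<in> K \<Longrightarrow> v \<in> K \<Longrightarrow> u + v \<in> K" "\<And>u v. u \<in> K \<Longrightarrow> v \<in> K \<Longrightarrow> u - v \<in> K"
    and "x - y \<in> K"
  shows "qclass x K \<subseteq> qclass y K"
proof
  fix z assume "z \<in> qclass x K"
  then obtain u where u: "u \<in> K" "z = x + u" unfolding qclass_def by blast
  have "x - y + u \<in> K" using K(1)[OF assms(3) u(1)] .
  moreover have "z = y + (x - y + u)" using u by simp
  ultimately show "z \<in> qclass y K" unfolding qclass_def by blast
qed

lemma qclass_eq2: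
  assumes K: "\<And>u v. u \<in> K \<Longrightarrow> v \<in> K \<Longrightarrow> u + v \<in> K" "\<And>u v. u \<in> K \<Longrightarrow> v \<in> K \<Longrightarrow> u - v \<in> K"
    and "x - y \<in> K" and "0 \<in> K"
  shows "qclass x K = qclass y K"
proof
  show "qclass x K \<subseteq> qclass y K" by (rule qclass_eq[OF K assms(3)])
  have "y - x \<in> K" using K(2)[OF assms(4) assms(3)] by simp
  then show "qclass y K \<subseteq> qclass x K" using qclass_eq[OF K(1) K(2)] by blast
qed

lemma qclass_eqD:
  assumes "qclass x K = qclass y K" "0 \<in> K"
  shows "x - y \<in> K"
proof -
  have "x \<in> qclass x K" using assms(2) unfolding qclass_def by force
  then have "x \<in> qclass y K" using assms(1) by simp
  then obtain u where "u \<in> K" "x = y + u" unfolding qclass_def by blast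
  then show ?thesis by simp
qed

theorem mainTheorem5:
  fixes S :: "(int ^ 'n) set"
    and F :: "(real ^ 'n) set"
    and k :: nat
    and \<sigma> :: "nat \<Rightarrow> int ^ 'n"
    and \<gamma> :: "nat \<Rightarrow> int ^ 'n"
  assumes aff: "affine_semigroup S"
    and prim: "\<forall>i<k. primitive (\<sigma> i)"
    and nonneg: "\<forall>i<k. \<forall>y\<in>pos S. 0 \<le> rlf (\<sigma> i) y"
    and facets: "\<forall>i<k. (pos S \<inter> hyp (\<sigma> i)) facet_of (pos S)"
    and face: "F face_of (pos S)"
    and F_def: "F = pos S \<inter> (\<Inter>i\<in>{..<k}. hyp (\<sigma> i))"
    and cond1: "(\<forall>j<k. \<gamma> j \<in> S) \<and>
                (\<forall>i<k. \<forall>j<k. lf (\<sigma> i) (\<gamma> j) = (if i = j then 1 else 0))"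
    and cond2: "grp (pts_in S F) = grp S \<inter> {x. \<forall>i<k. lf (\<sigma> i) x = 0}"
  shows "free_quotient_basis (SF S F) (grp (pts_in S F)) \<gamma> k"
proof -
  define K where "K = {x::int^'n. \<forall>i<k. lf (\<sigma> i) x = 0}"
  obtain G where G: "S = monoid_gen G" using aff unfolding affine_semigroup_def by blast
  have UK: "grp (pts_in S F) = K" using cond2 aff unfolding affine_semigroup_def K_def by simp
  have Kadd: "u + v \<in> K" if "u \<in> K" "v \<in> K" for u v using that by (simp add: K_def lf_add)
  have Ksub: "u - v \<in> K" if "u \<in> K" "v \<in> K" for u v using that by (simp add: K_def lf_diff)
  have K0: "0 \<in> K" by (simp add: K_def lf_zero)
  define gs where "gs m = (\<Sum>i<k. int (m i) *s \<gamma> i)" for m :: "nat \<Rightarrow> nat"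
  have lfgs: "lf (\<sigma> i) (gs m) = int (m i)" if "i < k" for i m
  proof -
    have "lf (\<sigma> i) (gs m) = (\<Sum>j<k. int (m j) * (if i = j then 1 else 0))"
      unfolding gs_def lf_sum lf_smult using cond1 that by simp
    also have "\<dots> = (\<Sum>j<k. if i = j then int (m j) else 0)"
      by (rule sum.cong) auto
    also have "\<dots> = int (m i)" using that by simp
    finally show ?thesis .
  qed
  have gsS: "gs m \<in> S" for m unfolding gs_def G using cond1 G by (intro monoid_gen_sum) simp
  have ptsF0: "0 \<in> pts_in S F"
    unfolding pts_in_def F_def hyp_def G
    by (simp add: rvec_zero rlf_def monoid_gen_zero zero_pos)
  have SF_lf: "\<exists>m. (\<forall>i\<ge>k. m i = 0) \<and> x - gs m \<in> K" if xSF: "x \<in> SF S F" for x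
  proof -
    obtain a b where ab: "x = a - b" "a \<in> S" "b \<in> pts_in S F" using xSF unfolding SF_def by blast
    have b0: "lf (\<sigma> i) b = 0" if "i < k" for i
      using ab(3) that unfolding pts_in_def F_def hyp_def by (auto simp: rlf_rvec)
    have a0: "0 \<le> lf (\<sigma> i) a" if "i < k" for i
      using nonneg rvec_pos[OF ab(2)] that by (metis of_int_0_le_iff rlf_rvec)
    define m where "m i = (if i < k then nat (lf (\<sigma> i) a) else 0)" for i
    have "x - gs m \<in> K" unfolding K_def
      using ab a0 b0 lfgs by (auto simp: lf_diff m_def)
    moreover have "\<forall>i\<ge>k. m i = 0" by (simp add: m_def)
    ultimately show ?thesis by blast
  qed
  show ?thesis
    unfolding free_quotient_basis_def UK bij_betw_def gs_def[symmetric]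
  proof (intro conjI)
    show "inj_on (\<lambda>m. qclass (gs m) K) {m. \<forall>i\<ge>k. m i = 0}"
    proof (rule inj_onI)
      fix m m' assume m: "m \<in> {m. \<forall>i\<ge>k. m i = 0}" and m': "m' \<in> {m. \<forall>i\<ge>k. m i = 0}"
        and eq: "qclass (gs m) K = qclass (gs m') K"
      have "gs m - gs m' \<in> K" using qclass_eqD[OF eq K0] .
      then have "int (m i) = int (m' i)" if "i < k" for i
        using that lfgs unfolding K_def by (auto simp: lf_diff)
      then have lt: "m i = m' i" if "i < k" for i using that by simp
      show "m = m'"
      proof
        fix i show "m i = m' i"
        proof (cases "i < k")
          case True then show ?thesis using lt by simp
        next
          case False then show ?thesis using m m' by simp
        qed
      qed
    qed
    show "(\<lambda>m. qclass (gs m) K) ` {m. \<forall>i\<ge>k. m i = 0} = (\<lambda>x. qclass x K) ` SF S F"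
    proof
      show "(\<lambda>m. qclass (gs m) K) ` {m. \<forall>i\<ge>k. m i = 0} \<subseteq> (\<lambda>x. qclass x K) ` SF S F"
      proof clarify
        fix m :: "nat \<Rightarrow> nat"
        have "gs m = gs m - 0" by simp
        then have "gs m \<in> SF S F" unfolding SF_def using gsS ptsF0 by blast
        then show "qclass (gs m) K \<in> (\<lambda>x. qclass x K) ` SF S F" by blast
      qed
      show "(\<lambda>x. qclass x K) ` SF S F \<subseteq> (\<lambda>m. qclass (gs m) K) ` {m. \<forall>i\<ge>k. m i = 0}"
      proof clarify
        fix x assume "x \<in> SF S F"
        then obtain m where m: "\<forall>i\<ge>k. m i = 0" "x - gs m \<in> K" using SF_lf by blast
        have "qclass x K = qclass (gs m) K" by (rule qclass_eq2[OF Kadd Ksub m(2) K0])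
        then show "qclass x K \<in> (\<lambda>m. qclass (gs m) K) ` {m. \<forall>i\<ge>k. m i = 0}" using m(1) by blast
      qed
    qed
  qed
qed

end
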